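(* Let $n\in\mathbb{N}$ and $a\in\mathbb{R}$ with $|a|>5$. Let $\tilde{E}_n(a,1)$ be the $(n+1)\times n$ matrix whose $(i,j)$ entry is $a$ if $i=j$, $1$ if $j=i+1$, $a$ if $i=j+1$, $1$ if $i=j+2$, and $0$ otherwise, and let $\tilde{B}_n(a,1)$ be the $(n+3)\times n$ matrix whose first row is $(1,0,\dots,0)$, whose rows $2,\dots,n+2$ are the rows of $\tilde{E}_n(a,1)$ in order, and whose last row is $(0,\dots,0,1)$. Then the columns of $\tilde{B}_n(a,1)$ are linearly independent, and every non-zero linear combination of these columns has at least $4$ non-zero entries. *)

theory Defs
  imports Complex_Main
begin

text \<open>Matrices with dimensions depending on n are represented as functions
  nat \<Rightarrow> nat \<Rightarrow> real with 1-based indices (row i, column j),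
  as in the paper; entries outside the stated index ranges are irrelevant.\<close>

definition Etilde :: "nat \<Rightarrow> real \<Rightarrow> real \<Rightarrow> nat \<Rightarrow> nat \<Rightarrow> real" where
  "Etilde n a b i j =
     (if i = j then a
      else if j = i + 1 then b
      else if i = j + 1 then a
      else if i = j + 2 then b
      else 0)"

definition Btilde :: "nat \<Rightarrow> real \<Rightarrow> real \<Rightarrow> nat \<Rightarrow> nat \<Rightarrow> real" where
  "Btilde n a b i j =
     (if i = 1 then (if j = 1 then 1 else 0)
      else if i = n + 3 then (if j = n then 1 else 0)
      else Etilde n a b (i - 1) j)"

definition col_comb :: "nat \<Rightarrow> (nat \<Rightarrow> nat \<Rightarrow> real) \<Rightarrow> (nat \<Rightarrow> real) \<Rightarrow> nat \<Rightarrow> real" where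
  "col_comb n M c i = (\<Sum>j=1..n. c j * M i j)"

definition cols_lin_indep :: "nat \<Rightarrow> nat \<Rightarrow> (nat \<Rightarrow> nat \<Rightarrow> real) \<Rightarrow> bool" where
  "cols_lin_indep m n M \<longleftrightarrow>
     (\<forall>c. (\<forall>i\<in>{1..m}. col_comb n M c i = 0) \<longrightarrow> (\<forall>j\<in>{1..n}. c j = 0))"

end

theory Submission
  imports Defs
begin


lemma key_det:
  fixes r u s1 s2 :: real and p q :: nat
  assumes ru: "r*u = 1" and R: "\<bar>r\<bar> \<ge> 7/2" and q0: "0<q" and qp: "q<p"
    and s1: "\<bar>s1\<bar> = 1" and s2: "\<bar>s2\<bar> = 1"
  shows "(r^q - u^q)*(r^p - s2) - (r^p - u^p)*(r^q - s1) \<noteq> 0"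
proof -
  have u1: "\<bar>u\<bar> \<le> 1"
  proof -
    have "u = 1/r" using ru by (metis nonzero_eq_divide_eq mult.commute mult_zero_left zero_neq_one)
    then have "\<bar>u\<bar> = 1/\<bar>r\<bar>" by simp
    also have "\<dots> \<le> 1" using R by simp
    finally show ?thesis .
  qed
  have uk: "\<bar>u^k\<bar> \<le> 1" for k by (simp add: power_abs power_le_one u1)
  have e1: "u^q * r^p = r^(p-q)"
  proof -
    have "r^p = r^q * r^(p-q)" using qp by (simp flip: power_add)
    then have "u^q * r^p = (u*r)^q * r^(p-q)" by (simp add: power_mult_distrib)
    then show ?thesis using ru by (simp add: mult.commute)
  qed
  have e2: "u^p * r^q = u^(p-q)"
  proof -
    have "u^p = u^q * u^(p-q)" using qp by (simp flip: power_add)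
    then have "u^p * r^q = (u*r)^q * u^(p-q)" by (simp add: power_mult_distrib)
    then show ?thesis using ru by (simp add: mult.commute)
  qed
  have eq: "(r^q - u^q)*(r^p - s2) - (r^p - u^p)*(r^q - s1)
      = s1 * r^p - s2 * r^q - r^(p-q) + u^(p-q) + s2 * u^q - s1 * u^p"
    using e1 e2 by (simp add: algebra_simps)
  define RR where "RR = \<bar>r\<bar>"
  have RR1: "RR \<ge> 7/2" using R RR_def by simp
  have pm: "p = Suc (p-1)" "p - 1 \<ge> 1" using q0 qp by auto
  have A: "\<bar>r^p\<bar> = RR * RR^(p-1)" using pm(1) RR_def by (metis power_Suc power_abs)
  have B: "\<bar>r^q\<bar> \<le> RR^(p-1)"
  proof -
    have "RR^q \<le> RR^(p-1)" using qp RR1 by (intro power_increasing) auto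
    then show ?thesis by (simp add: RR_def power_abs)
  qed
  have C: "\<bar>r^(p-q)\<bar> \<le> RR^(p-1)"
  proof -
    have "RR^(p-q) \<le> RR^(p-1)" using qp q0 RR1 by (intro power_increasing) auto
    then show ?thesis by (simp add: RR_def power_abs)
  qed
  have D: "RR^(p-1) \<ge> 7/2" using pm(2) RR1
  proof -
    have "RR^1 \<le> RR^(p-1)" using pm(2) RR1 by (intro power_increasing) auto
    then show ?thesis using RR1 by simp
  qed
  have "\<bar>s1 * r^p\<bar> = RR * RR^(p-1)" using A s1 by (simp add: abs_mult)
  moreover have "\<bar>s2 * r^q\<bar> \<le> RR^(p-1)" using B s2 by (simp add: abs_mult)
  moreover have "\<bar>s2 * u^q\<bar> \<le> 1" "\<bar>s1 * u^p\<bar> \<le> 1" "\<bar>u^(p-q)\<bar> \<le> 1"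
    using uk s1 s2 by (simp_all add: abs_mult)
  moreover have "RR * RR^(p-1) \<ge> 7/2 * RR^(p-1)" using RR1 D by (intro mult_right_mono) auto
  ultimately have "\<bar>s1 * r^p - s2 * r^q - r^(p-q) + u^(p-q) + s2 * u^q - s1 * u^p\<bar> > 0"
    using C D by linarith
  then show ?thesis using eq by simp
qed

lemma three_ord:
  fixes r u al be ga :: real and x y z :: nat
  assumes ru: "r*u = 1" and R: "\<bar>r\<bar> \<ge> 7/2" and xy: "x<y" and yz: "y<z"
    and h1: "al * r^x + be * r^y + ga * r^z = 0"
    and h2: "al * u^x + be * u^y + ga * u^z = 0"
    and h3: "al * (-1)^x + be * (-1)^y + ga * (-1)^z = (0::real)"
  shows "al = 0 \<and> be = 0 \<and> ga = 0"
proof -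
  define q where "q = y - x"
  define p where "p = z - x"
  have yq: "y = x + q" and zp: "z = x + p" using xy yz q_def p_def by auto
  have q0: "0 < q" and qp: "q < p" using xy yz q_def p_def by auto
  have r0: "r \<noteq> 0" and u0: "u \<noteq> 0" using ru by auto
  have "r^x * (al + be * r^q + ga * r^p) = 0" using h1 unfolding yq zp by (simp add: power_add algebra_simps)
  then have E1: "al + be * r^q + ga * r^p = 0" using r0 by simp
  have "u^x * (al + be * u^q + ga * u^p) = 0" using h2 unfolding yq zp by (simp add: power_add algebra_simps)
  then have E2: "al + be * u^q + ga * u^p = 0" using u0 by simp
  have "(-1::real)^x * (al + be * (-1)^q + ga * (-1)^p) = 0" using h3 unfolding yq zp by (simp add: power_add algebra_simps)
  then have E3: "al + be * (-1)^q + ga * (-1)^p = (0::real)" by simp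
  define s1 :: real where "s1 = (-1)^q"
  define s2 :: real where "s2 = (-1)^p"
  have s1a: "\<bar>s1\<bar> = 1" and s2a: "\<bar>s2\<bar> = 1" unfolding s1_def s2_def by simp_all
  define Dt where "Dt = (r^q - u^q)*(r^p - s2) - (r^p - u^p)*(r^q - s1)"
  have Dt0: "Dt \<noteq> 0" unfolding Dt_def using key_det[OF ru R q0 qp s1a s2a] .
  have F1: "be * (r^q - u^q) + ga * (r^p - u^p) = 0" using E1 E2 by (simp add: algebra_simps)
  have F2: "be * (r^q - s1) + ga * (r^p - s2) = 0" using E1 E3 unfolding s1_def s2_def by (simp add: algebra_simps)
  have "be * Dt = (be * (r^q - u^q) + ga * (r^p - u^p)) * (r^p - s2) - (be * (r^q - s1) + ga * (r^p - s2)) * (r^p - u^p)"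
    unfolding Dt_def by (simp add: algebra_simps)
  then have "be * Dt = 0" using F1 F2 by simp
  then have b: "be = 0" using Dt0 by simp
  have "ga * Dt = (be * (r^q - s1) + ga * (r^p - s2)) * (r^q - u^q) - (be * (r^q - u^q) + ga * (r^p - u^p)) * (r^q - s1)"
    unfolding Dt_def by (simp add: algebra_simps)
  then have "ga * Dt = 0" using F1 F2 by simp
  then have g: "ga = 0" using Dt0 by simp
  show ?thesis using E1 b g by simp
qed

lemma three_dist:
  fixes r u al be ga :: real and x y z :: nat
  assumes ru: "r*u = 1" and R: "\<bar>r\<bar> \<ge> 7/2" and d: "x \<noteq> y" "y \<noteq> z" "x \<noteq> z"
    and h: "\<And>t. t \<in> {r, u, -1} \<Longrightarrow> al * t^x + be * t^y + ga * t^z = 0"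
  shows "al = 0 \<and> be = 0 \<and> ga = 0"
proof -
  have h1: "al * r^x + be * r^y + ga * r^z = 0" and h2: "al * u^x + be * u^y + ga * u^z = 0"
    and h3: "al * (-1)^x + be * (-1)^y + ga * (-1)^z = (0::real)" using h by auto
  note T = three_ord[OF ru R]
  consider "x<y" "y<z" | "x<z" "z<y" | "y<x" "x<z" | "y<z" "z<x" | "z<x" "x<y" | "z<y" "y<x"
    using d by linarith
  then show ?thesis
  proof cases
    case 1 then show ?thesis using T[of x y z al be ga] h1 h2 h3 by auto
  next
    case 2 then show ?thesis using T[of x z y al ga be] h1 h2 h3 by (auto simp: algebra_simps)
  next
    case 3 then show ?thesis using T[of y x z be al ga] h1 h2 h3 by (auto simp: algebra_simps)
  next
    case 4 then show ?thesis using T[of y z x be ga al] h1 h2 h3 by (auto simp: algebra_simps)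
  next
    case 5 then show ?thesis using T[of z x y ga al be] h1 h2 h3 by (auto simp: algebra_simps)
  next
    case 6 then show ?thesis using T[of z y x ga be al] h1 h2 h3 by (auto simp: algebra_simps)
  qed
qed

lemma colB:
  assumes j: "j \<in> {1..n}" and i: "i \<in> {1..n+3}"
  shows "Btilde n a 1 i j = (if i = j then 1 else 0) + (if i = j+1 then a else 0)
     + (if i = j+2 then a else 0) + (if i = j+3 then 1 else 0)"
  using j i unfolding Btilde_def Etilde_def by auto

lemma colsum:
  assumes j: "j \<in> {1..n}"
  shows "(\<Sum>i=1..n+3. Btilde n a 1 i j * t^i) = t^j * (1 + a*t + a*t^2 + t^3)"
proof -
  have "(\<Sum>i=1..n+3. Btilde n a 1 i j * t^i) = (\<Sum>i=1..n+3. (if i = j then t^i else 0) + (if i = j+1 then a*t^i else 0)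
     + (if i = j+2 then a*t^i else 0) + (if i = j+3 then t^i else 0))"
    by (intro sum.cong refl) (simp add: colB[OF j] ring_distribs)
  also have "\<dots> = t^j + a*t^(j+1) + a*t^(j+2) + t^(j+3)"
    using j by (simp add: sum.distrib)
  also have "\<dots> = t^j * (1 + a*t + a*t^2 + t^3)" by (simp add: power_add algebra_simps power2_eq_square)
  finally show ?thesis .
qed

lemma Fsum:
  "(\<Sum>i=1..n+3. col_comb n (Btilde n a 1) c i * t^i) = (1 + a*t + a*t^2 + t^3) * (\<Sum>j=1..n. c j * t^j)"
proof -
  have "(\<Sum>i=1..n+3. col_comb n (Btilde n a 1) c i * t^i) = (\<Sum>i=1..n+3. \<Sum>j=1..n. c j * (Btilde n a 1 i j * t^i))"
    unfolding col_comb_def by (simp add: sum_distrib_right mult.assoc)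
  also have "\<dots> = (\<Sum>j=1..n. \<Sum>i=1..n+3. c j * (Btilde n a 1 i j * t^i))" by (rule sum.swap)
  also have "\<dots> = (\<Sum>j=1..n. c j * (t^j * (1 + a*t + a*t^2 + t^3)))"
    apply (intro sum.cong refl)
    subgoal for j by (simp only: sum_distrib_left[symmetric] colsum)
    done
  also have "\<dots> = (1 + a*t + a*t^2 + t^3) * (\<Sum>j=1..n. c j * t^j)"
    by (subst sum_distrib_left) (simp add: mult_ac)
  finally show ?thesis .
qed


lemma root_exists:
  fixes a :: real
  assumes "\<bar>a\<bar> > 5"
  obtains r where "r^2 + (a-1)*r + 1 = 0" "\<bar>r\<bar> \<ge> 7/2"
proof -
  define s where "s = 1 - a"
  have s4: "\<bar>s\<bar> > 4" using assms s_def by linarith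
  define w where "w = sqrt (s^2 - 4)"
  have "s^2 > 16"
  proof -
    have "(4::real) * 4 < \<bar>s\<bar> * \<bar>s\<bar>" using s4 by (intro mult_strict_mono) auto
    then show ?thesis by (simp add: power2_eq_square)
  qed
  then have w2: "w^2 = s^2 - 4" unfolding w_def by simp
  have "sqrt 9 \<le> w" unfolding w_def using \<open>s^2 > 16\<close> by (intro real_sqrt_le_mono) simp
  then have w3: "w \<ge> 3" by simp
  show ?thesis
  proof (cases "s > 0")
    case True
    define r where "r = (s + w)/2"
    have "4*(r^2 - s*r + 1) = w^2 - s^2 + 4" unfolding r_def by (simp add: power2_eq_square field_simps; simp add: algebra_simps)
    then have "r^2 - s*r + 1 = 0" using w2 by simp
    then have "r^2 + (a-1)*r + 1 = 0" using s_def by (simp add: algebra_simps)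
    moreover have "\<bar>r\<bar> \<ge> 7/2" unfolding r_def using True s4 w3 by simp
    ultimately show ?thesis using that by blast
  next
    case False
    define r where "r = (s - w)/2"
    have "4*(r^2 - s*r + 1) = w^2 - s^2 + 4" unfolding r_def by (simp add: power2_eq_square field_simps; simp add: algebra_simps)
    then have "r^2 - s*r + 1 = 0" using w2 by simp
    then have "r^2 + (a-1)*r + 1 = 0" using s_def by (simp add: algebra_simps)
    moreover have "\<bar>r\<bar> \<ge> 7/2" unfolding r_def using False s4 w3 by simp
    ultimately show ?thesis using that by blast
  qed
qed


lemma main_card:
  fixes n :: nat and a :: real and c :: "nat \<Rightarrow> real"
  assumes A: "\<bar>a\<bar> > 5" and cj: "\<exists>j\<in>{1..n}. c j \<noteq> 0"
  shows "card {i\<in>{1..n+3}. col_comb n (Btilde n a 1) c i \<noteq> 0} \<ge> 4"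
proof (rule ccontr)
  define v where "v i = col_comb n (Btilde n a 1) c i" for i
  define S where "S = {i\<in>{1..n+3}. v i \<noteq> 0}"
  define qq where "qq t = 1 + a*t + a*t^2 + t^3" for t :: real
  assume "\<not> ?thesis"
  then have cS: "card S \<le> 3" unfolding S_def v_def by simp
  have finS: "finite S" unfolding S_def by simp
  have F: "(\<Sum>i=1..n+3. v i * t^i) = qq t * (\<Sum>j=1..n. c j * t^j)" for t
    unfolding v_def qq_def by (rule Fsum)
  have FS: "(\<Sum>i\<in>S. v i * t^i) = (\<Sum>i=1..n+3. v i * t^i)" for t
    unfolding S_def by (intro sum.mono_neutral_left) auto
  obtain r where r: "r^2 + (a-1)*r + 1 = 0" "\<bar>r\<bar> \<ge> 7/2" using root_exists[OF A] by blast
  define u where "u = 1/r"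
  have r0: "r \<noteq> 0" using r by auto
  have ru: "r * u = 1" unfolding u_def using r0 by simp
  have qr: "qq r = 0"
  proof -
    have "qq r = (1+r)*(r^2 + (a-1)*r + 1)" unfolding qq_def by (simp add: algebra_simps power2_eq_square power3_eq_cube)
    then show ?thesis using r by simp
  qed
  have qu: "qq u = 0"
  proof -
    have "qq u * r^3 = qq r" unfolding qq_def u_def using r0
      by (simp add: algebra_simps power2_eq_square power3_eq_cube)
    then show ?thesis using qr r0 by simp
  qed
  have qm: "qq (-1) = 0" unfolding qq_def by simp
  have Z: "(\<Sum>i\<in>S. v i * t^i) = 0" if "t \<in> {r, u, -1}" for t
    unfolding FS F using that qr qu qm by auto
  have T: "al = 0 \<and> be = 0 \<and> ga = 0" if "x \<noteq> y" "y \<noteq> z" "x \<noteq> z"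
    and "\<And>t. t \<in> {r, u, -1} \<Longrightarrow> al * t^x + be * t^y + ga * t^z = 0" for x y z al be ga
    using three_dist[OF ru r(2) that] .
  consider "card S = 0" | "card S = 1" | "card S = 2" | "card S = 3" using cS by linarith
  then show False
  proof cases
    case 1
    then have "S = {}" using finS by simp
    then have v0: "\<And>t. (\<Sum>i=1..n+3. v i * t^i) = 0" using FS by (metis sum.empty)
    define c' where "c' j = (if j = 0 then 0 else c j)" for j
    have G: "(\<Sum>j=1..n. c j * t^j) = (\<Sum>j\<le>n. c' j * t^j)" for t :: real
      unfolding c'_def by (intro sum.mono_neutral_cong_left) auto
    obtain j0 where j0: "j0 \<in> {1..n}" "c j0 \<noteq> 0" using cj by blast
    have f1: "finite {t::real. (\<Sum>j\<le>n. c' j * t^j) = 0}"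
      by (rule polyfun_finite_roots[THEN iffD2]) (rule exI[of _ j0], use j0 in \<open>auto simp: c'_def\<close>)
    define d :: "nat \<Rightarrow> real" where "d i = (if i = 0 \<or> i = 3 then 1 else if i \<le> 2 then a else 0)" for i
    have qqd: "qq t = (\<Sum>i\<le>3. d i * t^i)" for t
    proof -
      have "(\<Sum>i\<le>3. d i * t^i) = d 0 + d 1 * t + d 2 * t^2 + d 3 * t^3"
        by (simp add: numeral_3_eq_3 atMost_Suc numeral_2_eq_2)
      then show ?thesis by (simp add: d_def qq_def)
    qed
    have "finite {t::real. (\<Sum>i\<le>3. d i * t^i) = 0}"
      by (rule polyfun_finite_roots[THEN iffD2]) (auto simp: d_def intro!: exI[of _ 3])
    then have f2: "finite {t::real. qq t = 0}" by (simp only: qqd)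
    have "finite ({t::real. (\<Sum>j\<le>n. c' j * t^j) = 0} \<union> {t. qq t = 0})" using f1 f2 by simp
    then obtain t :: real where "t \<notin> {t::real. (\<Sum>j\<le>n. c' j * t^j) = 0} \<union> {t. qq t = 0}"
      using ex_new_if_finite[OF infinite_UNIV_char_0] by blast
    then have "qq t * (\<Sum>j=1..n. c j * t^j) \<noteq> 0" using G by simp
    then show False using v0 F by metis
  next
    case 2
    then obtain x where Sx: "S = {x}" using card_1_singletonE by blast
    have "v x = 0 \<and> (0::real) = 0 \<and> (0::real) = 0"
      using T[of x "x+1" "x+2" "v x" 0 0] Z unfolding Sx by simp
    then show False using Sx unfolding S_def by auto
  next
    case 3
    then obtain x y where Sx: "S = {x, y}" "x \<noteq> y" by (meson card_2_iff)
    have "v x = 0 \<and> v y = 0 \<and> (0::real) = 0"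
      using T[of x y "x+y+1" "v x" "v y" 0] Z Sx by simp
    then show False using Sx unfolding S_def by auto
  next
    case 4
    then obtain x y z where Sx: "S = {x, y, z}" "x \<noteq> y" "y \<noteq> z" "x \<noteq> z" by (meson card_3_iff)
    have "v x = 0 \<and> v y = 0 \<and> v z = 0"
    proof (rule T[OF Sx(2-4)])
      fix t :: real assume "t \<in> {r, u, -1}"
      then have "(\<Sum>i\<in>S. v i * t^i) = 0" by (rule Z)
      then show "v x * t^x + v y * t^y + v z * t^z = 0" using Sx by (simp add: add.assoc)
    qed
    then show False using Sx unfolding S_def by auto
  qed
qed

theorem corollary5p4:
  fixes n :: nat and a :: real
  assumes "\<bar>a\<bar> > 5"
  shows "cols_lin_indep (n + 3) n (Btilde n a 1)
    \<and> (\<forall>c. (\<exists>j\<in>{1..n}. c j \<noteq> 0) \<longrightarrow>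
           card {i\<in>{1..n+3}. col_comb n (Btilde n a 1) c i \<noteq> 0} \<ge> 4)"
proof
  show "\<forall>c. (\<exists>j\<in>{1..n}. c j \<noteq> 0) \<longrightarrow> card {i\<in>{1..n+3}. col_comb n (Btilde n a 1) c i \<noteq> 0} \<ge> 4"
    using main_card[OF assms] by blast
  show "cols_lin_indep (n + 3) n (Btilde n a 1)"
    unfolding cols_lin_indep_def
  proof (intro allI impI ballI)
    fix c :: "nat \<Rightarrow> real" and j
    assume h: "\<forall>i\<in>{1..n + 3}. col_comb n (Btilde n a 1) c i = 0" and j: "j \<in> {1..n}"
    show "c j = 0"
    proof (rule ccontr)
      assume "c j \<noteq> 0"
      then have "card {i\<in>{1..n+3}. col_comb n (Btilde n a 1) c i \<noteq> 0} \<ge> 4"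
        using main_card[OF assms] j by blast
      moreover have "{i\<in>{1..n+3}. col_comb n (Btilde n a 1) c i \<noteq> 0} = {}" using h by auto
      ultimately show False by (metis card.empty not_numeral_le_zero)
    qed
  qed
qed

end
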